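(* Let $p>1$, $\psi(w)=\frac1p\|w\|_p^p$ on $\mathbb{R}^d$, and let $L:\mathbb{R}^d\to\mathbb{R}$ be differentiable and convex. Let $w_{t+1}$ be obtained from $w_t$ by the mirror descent update $\nabla\psi(w_{t+1})=\nabla\psi(w_t)-\eta\nabla L(w_t)$, where $\eta>0$ is such that $\psi-\eta L$ is convex. Then $$\frac{p-1}{p}\|w_{t+1}\|_p^p-\frac{p-1}{p}\|w_t\|_p^p+\eta L(w_{t+1})-\eta L(w_t)\le\langle-\eta\nabla L(w_t),w_t\rangle.$$
   Context: In the paper $L(w)=\frac1n\sum_i\ell(y_i\langle w,x_i\rangle)$ with $\ell$ differentiable, decreasing and convex. *)

theory Defs
  imports "HOL-Analysis.Analysis"
begin

definition pnorm_pow :: "real \<Rightarrow> real^'n \<Rightarrow> real" where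
  "pnorm_pow p w = (\<Sum>i\<in>UNIV. \<bar>w $ i\<bar> powr p)"

definition psi :: "real \<Rightarrow> real^'n \<Rightarrow> real" where
  "psi p w = pnorm_pow p w / p"

end

theory Submission
  imports Defs
begin

lemma line_convex:
  fixes F :: "'a::real_vector \<Rightarrow> real"
  assumes "convex_on UNIV F"
  shows "convex_on UNIV (\<lambda>t::real. F (a + t *\<^sub>R b))"
proof (rule convex_onI)
  fix t x y :: real assume t: "0 < t" "t < 1"
  have "a + ((1 - t) *\<^sub>R x + t *\<^sub>R y) *\<^sub>R b = (1 - t) *\<^sub>R (a + x *\<^sub>R b) + t *\<^sub>R (a + y *\<^sub>R b)"
    by (simp add: algebra_simps)
  then show "F (a + ((1 - t) *\<^sub>R x + t *\<^sub>R y) *\<^sub>R b) \<le> (1 - t) * F (a + x *\<^sub>R b) + t * F (a + y *\<^sub>R b)"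
    using assms t by (simp add: convex_on_def)
qed simp

lemma grad_ineq:
  fixes F :: "real^'n \<Rightarrow> real"
  assumes cv: "convex_on UNIV F" and d: "(F has_derivative (\<lambda>h. G \<bullet> h)) (at x)"
  shows "F y - F x \<ge> G \<bullet> (y - x)"
proof -
  let ?h = "\<lambda>t::real. F (x + t *\<^sub>R (y - x))"
  have c: "convex_on UNIV ?h" by (rule line_convex[OF cv])
  have "((\<lambda>t::real. x + t *\<^sub>R (y - x)) has_derivative (\<lambda>t. t *\<^sub>R (y - x))) (at 0)"
    by (auto intro!: derivative_eq_intros)
  from diff_chain_at[OF this, of F "\<lambda>h. G \<bullet> h"] d
  have "(?h has_derivative (\<lambda>t. G \<bullet> (t *\<^sub>R (y - x)))) (at 0)"
    by (simp add: o_def)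
  then have "(?h has_field_derivative (G \<bullet> (y - x))) (at 0)"
    unfolding has_field_derivative_def by (rule has_derivative_eq_rhs) (auto simp: fun_eq_iff inner_scaleR_right)
  from convex_on_imp_above_tangent[OF c, of 0 1 "G \<bullet> (y - x)"] this
  show ?thesis by simp
qed

lemma euler:
  fixes p :: real and x :: "real^'n"
  assumes p: "p > 1" and d: "(psi p has_derivative (\<lambda>h. G \<bullet> h)) (at x)"
  shows "G \<bullet> x = pnorm_pow p x"
proof -
  have "((\<lambda>t::real. t *\<^sub>R x) has_derivative (\<lambda>t. t *\<^sub>R x)) (at 1)"
    by (auto intro!: derivative_eq_intros)
  from diff_chain_at[OF this, of "psi p" "\<lambda>h. G \<bullet> h"] d
  have "((\<lambda>t. psi p (t *\<^sub>R x)) has_derivative (\<lambda>t. G \<bullet> (t *\<^sub>R x))) (at 1)"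
    by (simp add: o_def)
  then have D1: "((\<lambda>t. psi p (t *\<^sub>R x)) has_field_derivative (G \<bullet> x)) (at 1)"
    unfolding has_field_derivative_def by (rule has_derivative_eq_rhs) (auto simp: fun_eq_iff inner_scaleR_right)
  have D2: "((\<lambda>t. t powr p * psi p x) has_field_derivative (p * psi p x)) (at 1)"
    by (auto intro!: derivative_eq_intros)
  have eq: "t powr p * psi p x = psi p (t *\<^sub>R x)" if "t \<in> {0<..}" for t :: real
  proof -
    have "\<bar>t * x $ i\<bar> powr p = t powr p * \<bar>x $ i\<bar> powr p" for i
      using that by (simp add: abs_mult powr_mult)
    then show ?thesis
      by (simp add: psi_def pnorm_pow_def sum_distrib_left)
  qed
  have "((\<lambda>t. psi p (t *\<^sub>R x)) has_field_derivative (p * psi p x)) (at 1)"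
    by (rule has_field_derivative_transform_within_open[OF D2, of "{0<..}"]) (auto simp: eq)
  from DERIV_unique[OF D1 this] p show ?thesis by (simp add: psi_def)
qed

theorem lemma6:
  fixes p \<eta> :: real
    and L :: "real^'n \<Rightarrow> real"
    and gradL gradpsi :: "real^'n \<Rightarrow> real^'n"
    and w w' :: "real^'n"
  assumes p_gt: "p > 1"
    and gradL: "\<And>x. (L has_derivative (\<lambda>h. gradL x \<bullet> h)) (at x)"
    and L_convex: "convex_on UNIV L"
    and gradpsi: "\<And>x. (psi p has_derivative (\<lambda>h. gradpsi x \<bullet> h)) (at x)"
    and eta_pos: "\<eta> > 0"
    and psi_minus_convex: "convex_on UNIV (\<lambda>x. psi p x - \<eta> * L x)"
    and update: "gradpsi w' = gradpsi w - \<eta> *\<^sub>R gradL w"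
  shows "(p - 1) / p * pnorm_pow p w' - (p - 1) / p * pnorm_pow p w
           + \<eta> * L w' - \<eta> * L w \<le> (- \<eta> *\<^sub>R gradL w) \<bullet> w"
proof -
  have d: "((\<lambda>x. psi p x - \<eta> * L x) has_derivative (\<lambda>h. (gradpsi w - \<eta> *\<^sub>R gradL w) \<bullet> h)) (at w)"
    using has_derivative_diff[OF gradpsi[of w] has_derivative_scaleR_right[OF gradL[of w], of \<eta>]]
    by (simp add: inner_diff_left)
  have ineq: "(psi p w' - \<eta> * L w') - (psi p w - \<eta> * L w) \<ge> (gradpsi w - \<eta> *\<^sub>R gradL w) \<bullet> (w' - w)"
    using grad_ineq[OF psi_minus_convex d] by simp
  have e1: "gradpsi w' \<bullet> w' = pnorm_pow p w'" by (rule euler[OF p_gt gradpsi])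
  have e2: "gradpsi w \<bullet> w = pnorm_pow p w" by (rule euler[OF p_gt gradpsi])
  have k: "(p - 1) / p * pnorm_pow p x = pnorm_pow p x - psi p x" for x :: "real^'n"
    using p_gt by (simp add: psi_def field_simps)
  show ?thesis
    unfolding k using ineq e1 e2 update
    by (simp add: inner_diff_left inner_diff_right algebra_simps)
qed

end
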